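(* The orbit space $G_{4,2}(\mathbb{R})/\mathbb{Z}_2^4$ is homeomorphic to the sphere $S^4$.
   Context: $G_{4,2}(\mathbb{R})$ is the real Grassmann manifold of $2$-planes in $\mathbb{R}^4$, with the action of $\mathbb{Z}_2^4=\{\pm1\}^4$ induced from coordinatewise sign changes $(\epsilon_1,\dots,\epsilon_4)\cdot(v_1,\dots,v_4)=(\epsilon_1v_1,\dots,\epsilon_4v_4)$ on $\mathbb{R}^4$. *)

theory Defs
  imports "HOL-Analysis.Analysis"
begin

definition quotient_topology :: "'a topology \<Rightarrow> ('a \<Rightarrow> 'b) \<Rightarrow> 'b topology" where
  "quotient_topology X f =
     topology (\<lambda>U. U \<subseteq> f ` topspace X \<and> openin X {x \<in> topspace X. f x \<in> U})"

lemma istopology_quotient: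
  "istopology (\<lambda>U. U \<subseteq> f ` topspace X \<and> openin X {x \<in> topspace X. f x \<in> U})"
proof -
  have int: "{x \<in> topspace X. f x \<in> S \<inter> T} =
             {x \<in> topspace X. f x \<in> S} \<inter> {x \<in> topspace X. f x \<in> T}" for S T
    by auto
  have un: "{x \<in> topspace X. f x \<in> \<Union>K} = \<Union>((\<lambda>U. {x \<in> topspace X. f x \<in> U}) ` K)" for K
    by auto
  show ?thesis
    unfolding istopology_def
  proof (rule conjI; intro allI impI)
    fix S T
    assume "S \<subseteq> f ` topspace X \<and> openin X {x \<in> topspace X. f x \<in> S}"
       and "T \<subseteq> f ` topspace X \<and> openin X {x \<in> topspace X. f x \<in> T}"
    then show "S \<inter> T \<subseteq> f ` topspace X \<and> openin X {x \<in> topspace X. f x \<in> S \<inter> T}"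
      unfolding int by (auto intro: openin_Int)
  next
    fix K
    assume "\<forall>U\<in>K. U \<subseteq> f ` topspace X \<and> openin X {x \<in> topspace X. f x \<in> U}"
    then show "\<Union>K \<subseteq> f ` topspace X \<and> openin X {x \<in> topspace X. f x \<in> \<Union>K}"
      unfolding un by (auto intro!: openin_Union)
  qed
qed

lemma openin_quotient_topology:
  "openin (quotient_topology X f) U \<longleftrightarrow>
     U \<subseteq> f ` topspace X \<and> openin X {x \<in> topspace X. f x \<in> U}"
  unfolding quotient_topology_def
  using istopology_quotient[of f X] by (simp add: topology_inverse')

definition orbit :: "'g set \<Rightarrow> ('g \<Rightarrow> 'a \<Rightarrow> 'a) \<Rightarrow> 'a \<Rightarrow> 'a set" where
  "orbit Grp act x = (\<lambda>g. act g x) ` Grp"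

definition orbit_space :: "'a topology \<Rightarrow> 'g set \<Rightarrow> ('g \<Rightarrow> 'a \<Rightarrow> 'a) \<Rightarrow> 'a set topology" where
  "orbit_space X Grp act = quotient_topology X (orbit Grp act)"

text \<open>The real Grassmannian \<open>G_{4,2}(\<real>)\<close>, realised (as usual) as the set of orthogonal
  projection matrices of rank 2 on \<open>\<real>^4\<close>, with the subspace topology from \<open>\<real>^{4\<times>4}\<close>.\<close>
definition grassmann42 :: "(real^4^4) set" where
  "grassmann42 = {P. transpose P = P \<and> P ** P = P \<and> rank P = 2}"

definition G42 :: "(real^4^4) topology" where
  "G42 = top_of_set grassmann42"

text \<open>The group \<open>\<int>_2^4 = {\<plusminus>1}^4\<close> and its action: the sign change
  \<open>D_\<epsilon> = diag(\<epsilon>\<^sub>1,\<dots>,\<epsilon>\<^sub>4)\<close> maps the plane \<open>V\<close> to \<open>D_\<epsilon> V\<close>, whose orthogonal projection is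
  \<open>D_\<epsilon> P D_\<epsilon>\<^sup>-\<^sup>1 = D_\<epsilon> P D_\<epsilon>\<close>.\<close>
definition signs4 :: "(real^4) set" where
  "signs4 = {e. \<forall>i. e $ i = 1 \<or> e $ i = -1}"

definition diag4 :: "real^4 \<Rightarrow> real^4^4" where
  "diag4 e = (\<chi> i j. if i = j then e $ i else 0)"

definition sign_act :: "real^4 \<Rightarrow> real^4^4 \<Rightarrow> real^4^4" where
  "sign_act e P = diag4 e ** P ** diag4 e"

end

theory Submission
  imports Defs
begin


lemma sign_act_entry: "sign_act e P $ i $ j = e$i * P$i$j * e$j"
proof -
  have "\<And>k. (\<Sum>x\<in>UNIV. (if k = x then e $ k else 0) * P $ x $ j) = e$k * P$k$j"
    by (simp add: if_distrib [of "\<lambda>x. x * _"] cong: if_cong)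
  then show ?thesis
  by (simp add: sign_act_def diag4_def matrix_matrix_mult_def if_distrib [of "\<lambda>x. _ * x"] 
        sum.delta cong: if_cong)
qed

definition ent :: "real \<Rightarrow> real \<Rightarrow> real \<Rightarrow> real \<Rightarrow> real \<Rightarrow> real \<Rightarrow> 4 \<Rightarrow> 4 \<Rightarrow> real" where
 "ent a b c d e f i j =
   (if i = 1 then (if j = 1 then a^2+b^2+c^2 else if j = 2 then b*d+c*e else if j = 3 then c*f-a*d else -a*e-b*f)
    else if i = 2 then (if j = 1 then b*d+c*e else if j = 2 then a^2+d^2+e^2 else if j = 3 then a*b+e*f else a*c-d*f)
    else if i = 3 then (if j = 1 then c*f-a*d else if j = 2 then a*b+e*f else if j = 3 then b^2+d^2+f^2 else b*c+d*e)
    else (if j = 1 then -a*e-b*f else if j = 2 then a*c-d*f else if j = 3 then b*c+d*e else c^2+e^2+f^2))"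

definition PM where "PM a b c d e f = (\<chi> i j. ent a b c d e f i j)"

lemma PM_sq:
  "PM a b c d e f ** PM a b c d e f =
   (a^2+b^2+c^2+d^2+e^2+f^2) *\<^sub>R PM a b c d e f - ((a*f-b*e+c*d)^2) *\<^sub>R mat 1"
  unfolding PM_def matrix_matrix_mult_def
  apply (simp add: vec_eq_iff forall_4 sum_4 ent_def mat_def)
  apply (intro conjI; algebra)
  done


lemma proj_expand:
  fixes P :: "real^'n^'n"
  assumes sym: "transpose P = P" and idem: "P ** P = P"
  obtains B where "finite B" "pairwise orthogonal B" "\<And>b. b\<in>B \<Longrightarrow> norm b = 1"
    "card B = rank P" "\<And>x. P *v x = (\<Sum>b\<in>B. (b \<bullet> x) *\<^sub>R b)"
proof -
  let ?S = "range (\<lambda>x. P *v x)"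
  have sub: "subspace ?S"
    by (intro linear_subspace_image matrix_vector_mul_linear subspace_UNIV)
  obtain B where BS: "B \<subseteq> ?S" and orth: "pairwise orthogonal B"
    and nB: "\<And>x. x \<in> B \<Longrightarrow> norm x = 1" and ind: "independent B"
    and cB: "card B = dim ?S" and spB: "span B = ?S"
    using orthonormal_basis_subspace[OF sub] by metis
  have fin: "finite B" using ind independent_imp_finite by blast
  have fixb: "P *v b = b" if bB: "b \<in> B" for b
  proof -
    obtain y where "b = P *v y" using bB BS by auto
    then show ?thesis by (simp add: matrix_vector_mul_assoc idem)
  qed
  have dotP: "b \<bullet> (P *v x) = b \<bullet> x" if "b \<in> B" for b x
  proof -
    have "b \<bullet> (P *v x) = (b v* P) \<bullet> x" by (simp add: dot_lmul_matrix)
    also have "b v* P = transpose P *v b" by (simp add: transpose_matrix_vector)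
    also have "\<dots> = b" using sym fixb[OF that] by simp
    finally show ?thesis .
  qed
  have ob: "c \<bullet> b = (if c = b then 1 else 0)" if "b \<in> B" "c \<in> B" for b c
  proof (cases "c = b")
    case True
    then show ?thesis using nB[OF that(1)] by (simp add: dot_square_norm)
  next
    case False
    then show ?thesis using orth that unfolding pairwise_def orthogonal_def by auto
  qed
  have exp: "P *v x = (\<Sum>b\<in>B. (b \<bullet> x) *\<^sub>R b)" for x
  proof -
    define z where "z = P *v x - (\<Sum>b\<in>B. (b \<bullet> x) *\<^sub>R b)"
    have zs: "z \<in> span B"
      unfolding z_def spB
      by (intro subspace_diff[OF sub] rangeI) (metis (no_types, lifting) spB span_sum span_mul span_base subsetI)
    have oc: "orthogonal c z" if "c \<in> B" for c
    proof -
      have "c \<bullet> (\<Sum>b\<in>B. (b \<bullet> x) *\<^sub>R b) = (\<Sum>b\<in>B. (b \<bullet> x) * (c \<bullet> b))"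
        by (simp add: inner_sum_right)
      also have "\<dots> = (\<Sum>b\<in>B. if c = b then c \<bullet> x else 0)"
        by (intro sum.cong refl) (simp add: ob that)
      also have "\<dots> = c \<bullet> x" using fin that by simp
      finally have h: "c \<bullet> (\<Sum>b\<in>B. (b \<bullet> x) *\<^sub>R b) = c \<bullet> x" .
      show ?thesis unfolding z_def orthogonal_def
        by (simp only: inner_diff_right h dotP[OF that] diff_self)
    qed
    have "orthogonal z z"
      by (rule orthogonal_to_span[OF zs]) (metis oc orthogonal_commute)
    then have "z = 0" by (simp add: orthogonal_def)
    then show ?thesis by (simp add: z_def)
  qed
  show ?thesis
    by (rule that[OF fin orth nB]) (auto simp: cB rank_dim_range exp)
qed


lemma proj_facts:
  fixes P :: "real^'n^'n"
  assumes sym: "transpose P = P" and idem: "P ** P = P"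
  obtains B where "finite B" "pairwise orthogonal B" "\<And>b. b\<in>B \<Longrightarrow> norm b = 1"
    "card B = rank P" "\<And>i j. P $ i $ j = (\<Sum>b\<in>B. b$i * b$j)"
proof -
  obtain B where fin: "finite B" and o: "pairwise orthogonal B" and n: "\<And>b. b\<in>B \<Longrightarrow> norm b = 1"
    and c: "card B = rank P" and e: "\<And>x. P *v x = (\<Sum>b\<in>B. (b \<bullet> x) *\<^sub>R b)"
    by (rule proj_expand[OF sym idem]) blast
  have ee: "P $ i $ j = (\<Sum>b\<in>B. b$i * b$j)" for i j
  proof -
    have "P $ i $ j = (P *v axis j 1) $ i"
      by (simp add: matrix_vector_mult_basis column_def)
    also have "\<dots> = (\<Sum>b\<in>B. b$i * b$j)"
      unfolding e by (simp add: sum_component cart_eq_inner_axis[symmetric] mult.commute)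
    finally show ?thesis .
  qed
  show ?thesis by (rule that[OF fin o n c ee])
qed

lemma rank_trace:
  fixes P :: "real^'n^'n"
  assumes sym: "transpose P = P" and idem: "P ** P = P"
  shows "real (rank P) = (\<Sum>i\<in>UNIV. P $ i $ i)"
proof -
  obtain B where fin: "finite B" and o: "pairwise orthogonal B" and n: "\<And>b. b\<in>B \<Longrightarrow> norm b = 1"
    and c: "card B = rank P" and e: "\<And>i j. P $ i $ j = (\<Sum>b\<in>B. b$i * b$j)"
    by (rule proj_facts[OF sym idem]) blast
  have "(\<Sum>i\<in>UNIV. P $ i $ i) = (\<Sum>b\<in>B. \<Sum>i\<in>UNIV. b$i * b$i)"
    unfolding e by (rule sum.swap)
  also have "\<dots> = (\<Sum>b\<in>B. 1)"
  proof (intro sum.cong refl)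
    fix b assume "b \<in> B"
    then have "b \<bullet> b = 1" using n by (simp add: dot_square_norm)
    then show "(\<Sum>i\<in>UNIV. b$i * b$i) = 1" by (simp add: inner_vec_def)
  qed
  finally show ?thesis using c by simp
qed

lemma grass_char:
  "grassmann42 = {P::real^4^4. transpose P = P \<and> P ** P = P \<and> (\<Sum>i\<in>UNIV. P $ i $ i) = 2}"
proof (intro set_eqI iffI)
  fix P assume "P \<in> grassmann42"
  then have s: "transpose P = P" "P ** P = P" "rank P = 2" by (auto simp: grassmann42_def)
  then have "(\<Sum>i\<in>UNIV. P $ i $ i) = real 2" using rank_trace[OF s(1,2)] by simp
  then show "P \<in> {P::real^4^4. transpose P = P \<and> P ** P = P \<and> (\<Sum>i\<in>UNIV. P $ i $ i) = 2}" using s by simp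
next
  fix P assume "P \<in> {P::real^4^4. transpose P = P \<and> P ** P = P \<and> (\<Sum>i\<in>UNIV. P $ i $ i) = 2}"
  then have s: "transpose P = P" "P ** P = P" "(\<Sum>i\<in>UNIV. P $ i $ i) = 2" by auto
  then have "real (rank P) = real 2" using rank_trace[OF s(1,2)] by simp
  then have "rank P = 2" by (simp only: of_nat_eq_iff)
  then show "P \<in> grassmann42" using s by (simp add: grassmann42_def)
qed

lemma grass_uv:
  assumes "P \<in> grassmann42"
  obtains u v :: "real^4" where "norm u = 1" "norm v = 1" "u \<bullet> v = 0"
     "\<And>i j. P $ i $ j = u$i * u$j + v$i * v$j"
proof -
  have sym: "transpose P = P" and idem: "P ** P = P" and r: "rank P = 2"
    using assms by (auto simp: grassmann42_def)
  obtain B where fin: "finite B" and o: "pairwise orthogonal B" and n: "\<And>b. b\<in>B \<Longrightarrow> norm b = 1"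
    and c: "card B = rank P" and e: "\<And>i j. P $ i $ j = (\<Sum>b\<in>B. b$i * b$j)"
    by (rule proj_facts[OF sym idem]) blast
  obtain u v where B: "B = {u, v}" and uv: "u \<noteq> v" using c r card_2_iff by metis
  have "u \<bullet> v = 0" using o uv B unfolding pairwise_def orthogonal_def by auto
  then show ?thesis using that[of u v] n B uv e by auto
qed


lemma uv_PM:
  fixes u v :: "real^4"
  assumes nu: "norm u = 1" and nv: "norm v = 1" and uv: "u \<bullet> v = 0"
    and P: "\<And>i j. P $ i $ j = u$i * u$j + v$i * v$j"
  defines "a \<equiv> u$1* v$2 - u$2* v$1" and "b \<equiv> u$1* v$3 - u$3* v$1" and "c \<equiv> u$1* v$4 - u$4* v$1"
      and "d \<equiv> u$2* v$3 - u$3* v$2" and "e \<equiv> u$2* v$4 - u$4* v$2" and "f \<equiv> u$3* v$4 - u$4* v$3"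
  shows "P = PM a b c d e f" "a^2+b^2+c^2+d^2+e^2+f^2 = 1" "a*f-b*e+c*d = 0"
proof -
  have hu: "u$1* u$1+u$2* u$2+u$3* u$3+u$4* u$4 = 1"
    proof -
    have "u \<bullet> u = 1" using nu by (simp add: dot_square_norm)
    then show ?thesis by (simp add: inner_vec_def sum_4)
  qed
  have hv: "v$1* v$1+v$2* v$2+v$3* v$3+v$4* v$4 = 1"
    proof -
    have "v \<bullet> v = 1" using nv by (simp add: dot_square_norm)
    then show ?thesis by (simp add: inner_vec_def sum_4)
  qed
  have huv: "u$1* v$1+u$2* v$2+u$3* v$3+u$4* v$4 = 0"
    using uv by (simp add: inner_vec_def sum_4)
  show "a^2+b^2+c^2+d^2+e^2+f^2 = 1"
    unfolding a_def b_def c_def d_def e_def f_def using hu hv huv by algebra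
  show "a*f-b*e+c*d = 0"
    unfolding a_def b_def c_def d_def e_def f_def by algebra
  show "P = PM a b c d e f"
    unfolding PM_def
    apply (simp add: vec_eq_iff forall_4 ent_def P)
    unfolding a_def b_def c_def d_def e_def f_def
    using hu hv huv
    apply (intro conjI; algebra)
    done
qed


lemma PM_grass:
  assumes S: "a^2+b^2+c^2+d^2+e^2+f^2 = 1" and Pf: "a*f-b*e+c*d = 0"
  shows "PM a b c d e f \<in> grassmann42"
  unfolding grass_char
proof (intro CollectI conjI)
  show "transpose (PM a b c d e f) = PM a b c d e f"
    by (simp add: PM_def transpose_def vec_eq_iff forall_4 ent_def)
  show "PM a b c d e f ** PM a b c d e f = PM a b c d e f"
    by (simp add: PM_sq S Pf)
  show "(\<Sum>i\<in>UNIV. PM a b c d e f $ i $ i) = 2"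
    using S by (simp add: PM_def sum_4 ent_def)
qed

definition "A1 P = 4*(P$1$3*P$2$4 - P$1$4*P$2$3)"
definition "A2 P = -4*(P$1$2*P$3$4 - P$1$4*P$3$2)"
definition "A3 P = 4*(P$1$2*P$4$3 - P$1$3*P$4$2)"
definition "B1 P = 2*(P$1$1+P$2$2-1)"
definition "B2 P = 2*(P$1$1+P$3$3-1)"
definition "B3 P = 2*(P$1$1+P$4$4-1)"

lemma PM_AB:
  assumes S: "a^2+b^2+c^2+d^2+e^2+f^2 = 1" and Pf: "a*f-b*e+c*d = 0"
  shows "A1 (PM a b c d e f) = 4*a*f" "A2 (PM a b c d e f) = -4*b*e" "A3 (PM a b c d e f) = 4*c*d"
    "B1 (PM a b c d e f) = 2*(a^2-f^2)" "B2 (PM a b c d e f) = 2*(b^2-e^2)" "B3 (PM a b c d e f) = 2*(c^2-d^2)"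
  using S Pf by (simp_all add: A1_def A2_def A3_def B1_def B2_def B3_def PM_def ent_def; algebra)+

lemma PM_sign:
  assumes s: "\<forall>i. s$i = 1 \<or> s$i = -1" and g: "g = 1 \<or> g = -1"
  shows "PM (g* s$1* s$2*a) (g* s$1* s$3*b) (g* s$1* s$4*c) (g* s$2* s$3*d) (g* s$2* s$4*e) (g* s$3* s$4*f)
         = sign_act s (PM a b c d e f)"
proof -
  have q: "s$1* s$1 = 1" "s$2* s$2 = 1" "s$3* s$3 = 1" "s$4* s$4 = 1" "g*g = 1"
    using s g by (auto simp: forall_4)
  show ?thesis
    apply (simp add: vec_eq_iff forall_4 sign_act_entry PM_def ent_def)
    using q by (intro conjI; algebra)
qed

lemma AB_sign:
  assumes s: "s \<in> signs4"
  shows "A1 (sign_act s P) = (s$1* s$2* s$3* s$4) * A1 P" "A2 (sign_act s P) = (s$1* s$2* s$3* s$4) * A2 P"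
    "A3 (sign_act s P) = (s$1* s$2* s$3* s$4) * A3 P"
    "B1 (sign_act s P) = B1 P" "B2 (sign_act s P) = B2 P" "B3 (sign_act s P) = B3 P"
proof -
  have q: "s$1* s$1 = 1" "s$2* s$2 = 1" "s$3* s$3 = 1" "s$4* s$4 = 1"
    using s by (auto simp: signs4_def forall_4)
  show "A1 (sign_act s P) = (s$1* s$2* s$3* s$4) * A1 P" unfolding A1_def sign_act_entry by (simp add: algebra_simps)
  show "A2 (sign_act s P) = (s$1* s$2* s$3* s$4) * A2 P" unfolding A2_def sign_act_entry by (simp add: algebra_simps)
  show "A3 (sign_act s P) = (s$1* s$2* s$3* s$4) * A3 P" unfolding A3_def sign_act_entry by (simp add: algebra_simps)
  show "B1 (sign_act s P) = B1 P" unfolding B1_def sign_act_entry using q by algebra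
  show "B2 (sign_act s P) = B2 P" unfolding B2_def sign_act_entry using q by algebra
  show "B3 (sign_act s P) = B3 P" unfolding B3_def sign_act_entry using q by algebra
qed


lemma sqrt_pair: "\<exists>x y::real. 4*x*y = A \<and> 2*(x^2-y^2) = B \<and> 2*(x^2+y^2) = sqrt(A^2+B^2)"
proof -
  define r where "r = sqrt(A^2+B^2)"
  have rB: "\<bar>B\<bar> \<le> r" unfolding r_def
    by (metis real_sqrt_abs real_sqrt_le_mono le_add_same_cancel2 zero_le_power2)
  have r0: "0 \<le> r" unfolding r_def by simp
  define sg :: real where "sg = (if A < 0 then -1 else 1)"
  define x where "x = sqrt((r+B)/4)"
  define y where "y = sg * sqrt((r-B)/4)"
  have x2: "x^2 = (r+B)/4" unfolding x_def using rB by (simp add: abs_le_iff)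
  have y2: "y^2 = (r-B)/4" unfolding y_def sg_def using rB by (simp add: abs_le_iff power_mult_distrib)
  have rr: "r^2 = A^2+B^2" unfolding r_def by simp
  have "sqrt((r+B)/4) * sqrt((r-B)/4) = sqrt((r^2-B^2)/16)"
    by (simp add: real_sqrt_mult[symmetric] power2_eq_square algebra_simps)
  also have "\<dots> = \<bar>A\<bar>/4" by (simp add: rr real_sqrt_divide)
  finally have "4*x*y = A" unfolding x_def y_def sg_def by auto
  moreover have "2*(x^2-y^2) = B" using x2 y2 by simp
  moreover have "2*(x^2+y^2) = r" using x2 y2 by simp
  ultimately show ?thesis unfolding r_def by blast
qed

lemma Complex_sq: "(Complex a b)^2 = Complex (a^2-b^2) (2*a*b)"
  by (simp add: complex_eq_iff power2_eq_square)

lemma sq_unique: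
  fixes x y u v :: real
  assumes "x^2 - y^2 = u^2 - v^2" "x*y = u * v"
  shows "(x = u \<and> y = v) \<or> (x = -u \<and> y = -v)"
proof -
  have "(Complex x y)^2 = (Complex u v)^2" using assms by (simp add: Complex_sq)
  then have "Complex x y = Complex u v \<or> Complex x y = - Complex u v" by (simp add: power2_eq_iff)
  then show ?thesis by (auto simp: complex_eq_iff)
qed

lemma pair_sign:
  fixes x y x' y' g :: real
  assumes g: "g = 1 \<or> g = -1" and h1: "x'*y' = g*(x*y)" and h2: "x'^2-y'^2 = x^2-y^2"
  shows "\<exists>\<rho>. (\<rho> = 1 \<or> \<rho> = -1) \<and> x' = \<rho>*x \<and> y' = g*\<rho>*y"
proof -
  have "x'^2 - y'^2 = x^2 - (g*y)^2" using h2 g by auto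
  moreover have "x'*y' = x*(g*y)" using h1 by simp
  ultimately have "(x' = x \<and> y' = g*y) \<or> (x' = -x \<and> y' = -(g*y))" by (rule sq_unique)
  then show ?thesis
  proof
    assume "x' = x \<and> y' = g*y" then show ?thesis by (intro exI[of _ 1]) simp
  next
    assume "x' = -x \<and> y' = -(g*y)" then show ?thesis by (intro exI[of _ "-1"]) simp
  qed
qed

lemma sqrt_scale_le:
  fixes r A B :: real assumes "0 < r" "r \<le> 1"
  shows "sqrt(r^2*A^2 + r^4*B^2) \<le> r * sqrt(A^2+B^2)"
proof -
  have "r^2*A^2 + r^4*B^2 \<le> r^2*(A^2+B^2)"
  proof -
    have "r^4 \<le> r^2" using assms by (intro power_decreasing) auto
    then have "r^4*B^2 \<le> r^2*B^2" by (intro mult_right_mono) auto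
    then show ?thesis by (simp add: algebra_simps)
  qed
  then have "sqrt(r^2*A^2 + r^4*B^2) \<le> sqrt(r^2*(A^2+B^2))" by (rule real_sqrt_le_mono)
  also have "\<dots> = r * sqrt(A^2+B^2)" using assms by (simp add: real_sqrt_mult)
  finally show ?thesis .
qed

lemma sqrt_scale_ge:
  fixes r A B :: real assumes "1 \<le> r"
  shows "r * sqrt(A^2+B^2) \<le> sqrt(r^2*A^2 + r^4*B^2)"
proof -
  have "r^2*(A^2+B^2) \<le> r^2*A^2 + r^4*B^2"
  proof -
    have "r^2 \<le> r^4" using assms by (intro power_increasing) auto
    then have "r^2*B^2 \<le> r^4*B^2" by (intro mult_right_mono) auto
    then show ?thesis by (simp add: algebra_simps)
  qed
  then have "sqrt(r^2*(A^2+B^2)) \<le> sqrt(r^2*A^2 + r^4*B^2)" by (rule real_sqrt_le_mono)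
  moreover have "sqrt(r^2*(A^2+B^2)) = r * sqrt(A^2+B^2)" using assms by (simp add: real_sqrt_mult)
  ultimately show ?thesis by simp
qed

lemma inj_core:
  fixes A1 A2 A3 B1 B2 B3 A1' A2' A3' B1' B2' B3' t :: real
  assumes sA: "A1+A2+A3 = 0" and sA': "A1'+A2'+A3' = 0"
    and N: "sqrt(A1^2+B1^2) + sqrt(A2^2+B2^2) + sqrt(A3^2+B3^2) = 2"
    and N': "sqrt(A1'^2+B1'^2) + sqrt(A2'^2+B2'^2) + sqrt(A3'^2+B3'^2) = 2"
    and t: "t > 0"
    and h1: "A1'^2 - A2'^2 = t*(A1^2-A2^2)" and h2: "2*A1'*A2' = t*(2*A1*A2)"
    and hb: "B1' = t*B1" "B2' = t*B2" "B3' = t*B3"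
  shows "\<exists>g. (g = 1 \<or> g = -1) \<and> A1' = g*A1 \<and> A2' = g*A2 \<and> A3' = g*A3
              \<and> B1' = B1 \<and> B2' = B2 \<and> B3' = B3"
proof -
  define r where "r = sqrt t"
  have r0: "r > 0" and rt: "r^2 = t" using t by (auto simp: r_def)
  have "A1'^2 - A2'^2 = (r*A1)^2 - (r*A2)^2" using h1 rt by (simp add: power_mult_distrib algebra_simps)
  moreover have "A1'*A2' = (r*A1)*(r*A2)" using h2 rt by (simp add: power2_eq_square algebra_simps)
  ultimately have "(A1' = r*A1 \<and> A2' = r*A2) \<or> (A1' = -(r*A1) \<and> A2' = -(r*A2))" by (rule sq_unique)
  then obtain g where g: "g = 1 \<or> g = -1" and a1: "A1' = g*r*A1" and a2: "A2' = g*r*A2"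
  proof
    assume "A1' = r*A1 \<and> A2' = r*A2" then show thesis using that[of 1] by simp
  next
    assume "A1' = -(r*A1) \<and> A2' = -(r*A2)" then show thesis using that[of "-1"] by simp
  qed
  have e3: "A3' = -(A1'+A2')" "A3 = -(A1+A2)" using sA sA' by linarith+
  have a3: "A3' = g*r*A3" unfolding e3 a1 a2 by (simp add: algebra_simps)
  have gg: "(g*r)^2 = r^2" using g by auto
  have sq: "sqrt(A'^2+B'^2) = sqrt(r^2*A^2 + r^4*B^2)" if "A' = g*r*A" "B' = r^2*B" for A B A' B' :: real
  proof -
    have "A'^2 = r^2*A^2" using that(1) gg by (simp add: power_mult_distrib)
    moreover have "B'^2 = r^4*B^2" using that(2) by (simp add: power_mult_distrib flip: power_mult)
    ultimately show ?thesis by simp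
  qed
  have N'': "sqrt(r^2*A1^2 + r^4*B1^2) + sqrt(r^2*A2^2 + r^4*B2^2) + sqrt(r^2*A3^2 + r^4*B3^2) = 2"
    using N' sq[OF a1] sq[OF a2] sq[OF a3] hb rt by simp
  have RN: "r * sqrt(A1^2+B1^2) + r * sqrt(A2^2+B2^2) + r * sqrt(A3^2+B3^2) = 2*r"
  proof -
    have "r * sqrt(A1^2+B1^2) + r * sqrt(A2^2+B2^2) + r * sqrt(A3^2+B3^2)
        = r * (sqrt(A1^2+B1^2) + sqrt(A2^2+B2^2) + sqrt(A3^2+B3^2))" by (simp only: distrib_left)
    also have "\<dots> = r * 2" by (simp only: N)
    finally show ?thesis by simp
  qed
  have "r = 1"
  proof (rule ccontr)
    assume "r \<noteq> 1"
    then consider "r < 1" | "r > 1" by linarith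
    then show False
    proof cases
      case 1
      then have "2 \<le> r * sqrt(A1^2+B1^2) + r * sqrt(A2^2+B2^2) + r * sqrt(A3^2+B3^2)"
        using N'' sqrt_scale_le[OF r0, of A1 B1] sqrt_scale_le[OF r0, of A2 B2] sqrt_scale_le[OF r0, of A3 B3]
        by linarith
      also have "\<dots> = 2*r" by (rule RN)
      finally show False using 1 by simp
    next
      case 2
      then have "r * sqrt(A1^2+B1^2) + r * sqrt(A2^2+B2^2) + r * sqrt(A3^2+B3^2) \<le> 2"
        using N'' sqrt_scale_ge[of r A1 B1] sqrt_scale_ge[of r A2 B2] sqrt_scale_ge[of r A3 B3]
        by linarith
      moreover note RN
      ultimately show False using 2 by simp
    qed
  qed
  then have "t = 1" using rt by simp
  then show ?thesis using g a1 a2 a3 hb \<open>r = 1\<close> by auto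
qed


lemma sqrt_lin_ge:
  fixes T c d :: real assumes "1 \<le> T"
  shows "sqrt T * sqrt(c^2+d^2) \<le> sqrt(T*c^2 + T^2*d^2)"
proof -
  have "T*(c^2+d^2) \<le> T*c^2 + T^2*d^2"
  proof -
    have "T \<le> T^2" using assms by (simp add: power2_eq_square)
    then have "T*d^2 \<le> T^2*d^2" by (intro mult_right_mono) auto
    then show ?thesis by (simp add: algebra_simps)
  qed
  then have "sqrt(T*(c^2+d^2)) \<le> sqrt(T*c^2 + T^2*d^2)" by (rule real_sqrt_le_mono)
  then show ?thesis by (simp add: real_sqrt_mult)
qed

lemma surj_core:
  fixes y0 y1 y2 y3 y4 :: real
  assumes y: "y0^2+y1^2+y2^2+y3^2+y4^2 = 1"
  shows "\<exists>a b c d e f t. a^2+b^2+c^2+d^2+e^2+f^2 = 1 \<and> a*f-b*e+c*d = 0 \<and> t > 0 \<and>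
     (4*a*f)^2 - (-4*b*e)^2 = t*y0 \<and> 2*(4*a*f)*(-4*b*e) = t*y1 \<and>
     2*(a^2-f^2) = t*y2 \<and> 2*(b^2-e^2) = t*y3 \<and> 2*(c^2-d^2) = t*y4"
proof -
  obtain c1 c2 where hc: "4*c1*c2 = 2*y1" "2*(c1^2-c2^2) = 2*y0"
    using sqrt_pair[of "2*y1" "2*y0"] by blast
  define c3 where "c3 = -c1-c2"
  define g where "g = (\<lambda>t. sqrt(t*c1^2 + t^2*y2^2) + sqrt(t*c2^2 + t^2*y3^2) + sqrt(t*c3^2 + t^2*y4^2))"
  define K where "K = sqrt(c1^2+y2^2) + sqrt(c2^2+y3^2) + sqrt(c3^2+y4^2)"
  have K0: "K > 0"
  proof (rule ccontr)
    assume "\<not> K > 0"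
    then have "K = 0" unfolding K_def
      by (smt (verit) real_sqrt_ge_zero zero_le_power2)
    then have "sqrt(c1^2+y2^2) = 0" "sqrt(c2^2+y3^2) = 0" "sqrt(c3^2+y4^2) = 0"
      unfolding K_def by (smt (verit) real_sqrt_ge_zero zero_le_power2)+
    then have "c1 = 0" "y2 = 0" "c2 = 0" "y3 = 0" "y4 = 0"
      by (simp_all add: add_nonneg_eq_0_iff)
    then have "y0 = 0" "y1 = 0" using hc by auto
    then show False using y \<open>y2 = 0\<close> \<open>y3 = 0\<close> \<open>y4 = 0\<close> by simp
  qed
  define T where "T = max 1 (4/K^2)"
  have T1: "1 \<le> T" unfolding T_def by simp
  have "2 \<le> sqrt T * K"
  proof -
    have "sqrt (4/K^2) \<le> sqrt T" unfolding T_def by (intro real_sqrt_le_mono) simp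
    moreover have "sqrt (4/K^2) = 2/K" using K0 by (simp add: real_sqrt_divide)
    ultimately have "2/K \<le> sqrt T" by simp
    then show ?thesis using K0 by (simp add: field_simps)
  qed
  also have "sqrt T * K \<le> g T"
    unfolding K_def g_def distrib_left
    using sqrt_lin_ge[OF T1, of c1 y2] sqrt_lin_ge[OF T1, of c2 y3] sqrt_lin_ge[OF T1, of c3 y4]
    by linarith
  finally have gT: "2 \<le> g T" .
  have g0: "g 0 = 0" unfolding g_def by simp
  have cont: "continuous_on {0..T} g" unfolding g_def by (intro continuous_intros)
  obtain t where t: "0 \<le> t" "t \<le> T" "g t = 2"
    using IVT'[of g 0 2 T] gT g0 T1 cont by auto
  have tpos: "t > 0" using t g0 by (cases "t = 0") auto
  define A1 where "A1 = sqrt t * c1"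
  define A2 where "A2 = sqrt t * c2"
  define A3 where "A3 = sqrt t * c3"
  have sqA: "A1^2 = t*c1^2" "A2^2 = t*c2^2" "A3^2 = t*c3^2"
    unfolding A1_def A2_def A3_def using tpos by (simp_all add: power_mult_distrib)
  obtain a f where af: "4*a*f = A1" "2*(a^2-f^2) = t*y2" "2*(a^2+f^2) = sqrt(A1^2+(t*y2)^2)"
    using sqrt_pair[of A1 "t*y2"] by blast
  obtain b e where be: "4*b*e = -A2" "2*(b^2-e^2) = t*y3" "2*(b^2+e^2) = sqrt((-A2)^2+(t*y3)^2)"
    using sqrt_pair[of "-A2" "t*y3"] by blast
  obtain c d where cd: "4*c*d = A3" "2*(c^2-d^2) = t*y4" "2*(c^2+d^2) = sqrt(A3^2+(t*y4)^2)"
    using sqrt_pair[of A3 "t*y4"] by blast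
  have "2*(a^2+f^2) + 2*(b^2+e^2) + 2*(c^2+d^2) = g t"
    unfolding af(3) be(3) cd(3) g_def by (simp add: sqA power_mult_distrib)
  then have S: "a^2+b^2+c^2+d^2+e^2+f^2 = 1" using t(3) by simp
  have "4*(a*f-b*e+c*d) = A1 + A2 + A3" using af(1) be(1) cd(1) by (simp add: algebra_simps)
  also have "\<dots> = 0" unfolding A1_def A2_def A3_def c3_def by (simp add: algebra_simps)
  finally have Pf: "a*f-b*e+c*d = 0" by simp
  have v0: "(4*a*f)^2 - (-4*b*e)^2 = t*y0"
  proof -
    have "(4*a*f)^2 - (-4*b*e)^2 = A1^2 - A2^2" using af(1) be(1) by (simp add: power2_eq_square algebra_simps)
    also have "\<dots> = t*(c1^2-c2^2)" by (simp add: sqA algebra_simps)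
    finally show ?thesis using hc(2) by simp
  qed
  have v1: "2*(4*a*f)*(-4*b*e) = t*y1"
  proof -
    have "2*(4*a*f)*(-4*b*e) = 2*A1*A2" using af(1) be(1) by (simp add: algebra_simps)
    also have "\<dots> = 2*t*(c1*c2)" unfolding A1_def A2_def using tpos by (simp add: algebra_simps)
    also have "\<dots> = t*(2*c1*c2)" by (simp add: algebra_simps)
    also have "2*c1*c2 = y1" using hc(1) by linarith
    finally show ?thesis .
  qed
  show ?thesis using S Pf tpos v0 v1 af(2) be(2) cd(2) by blast
qed


definition Vv :: "real^4^4 \<Rightarrow> nat \<Rightarrow> real" where
  "Vv P k = (if k = 0 then A1 P ^2 - A2 P ^2 else if k = 1 then 2 * A1 P * A2 P else
             if k = 2 then B1 P else if k = 3 then B2 P else if k = 4 then B3 P else 0)"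
definition nV :: "real^4^4 \<Rightarrow> real" where "nV P = sqrt (\<Sum>k\<le>4. Vv P k ^ 2)"
definition Phi :: "real^4^4 \<Rightarrow> nat \<Rightarrow> real" where "Phi P = (\<lambda>k. Vv P k / nV P)"

lemma sum5: "(\<Sum>k\<le>(4::nat). h k) = h 0 + h 1 + h 2 + h 3 + (h 4::real)"
  by (simp add: numeral_eq_Suc atMost_Suc)

lemma grass_PM:
  assumes "P \<in> grassmann42"
  obtains a b c d e f where "P = PM a b c d e f" "a^2+b^2+c^2+d^2+e^2+f^2 = 1" "a*f-b*e+c*d = 0"
proof -
  obtain u v :: "real^4" where "norm u = 1" "norm v = 1" "u \<bullet> v = 0"
     "\<And>i j. P $ i $ j = u$i * u$j + v$i * v$j"
    using grass_uv[OF assms] by blast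
  from uv_PM[OF this] show ?thesis using that by blast
qed

lemma sqrt_sq_pair: "sqrt ((4*x*y)^2 + (2*(x^2-y^2))^2) = 2*(x^2+y^2)"
proof -
  have "(4*x*y)^2 + (2*(x^2-y^2))^2 = (2*(x^2+y^2))^2" by (simp add: power2_eq_square algebra_simps)
  then show ?thesis by simp
qed

lemma PM_N:
  assumes S: "a^2+b^2+c^2+d^2+e^2+f^2 = 1" and Pf: "a*f-b*e+c*d = 0"
  defines "P \<equiv> PM a b c d e f"
  shows "A1 P + A2 P + A3 P = 0"
    "sqrt(A1 P^2+B1 P^2) + sqrt(A2 P^2+B2 P^2) + sqrt(A3 P^2+B3 P^2) = 2"
proof -
  note ab = PM_AB[OF S Pf, folded P_def]
  show "A1 P + A2 P + A3 P = 0" unfolding ab using Pf by (simp add: algebra_simps)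
  have "sqrt(A2 P^2+B2 P^2) = sqrt ((4*b*e)^2 + (2*(b^2-e^2))^2)" unfolding ab by (simp add: power2_eq_square)
  then show "sqrt(A1 P^2+B1 P^2) + sqrt(A2 P^2+B2 P^2) + sqrt(A3 P^2+B3 P^2) = 2"
    unfolding ab sqrt_sq_pair using S by simp
qed

lemma nV_pos:
  assumes "P \<in> grassmann42" shows "nV P > 0"
proof -
  obtain a b c d e f where P: "P = PM a b c d e f" and S: "a^2+b^2+c^2+d^2+e^2+f^2 = 1" and Pf: "a*f-b*e+c*d = 0"
    using grass_PM[OF assms] by blast
  note N = PM_N[OF S Pf, folded P]
  show ?thesis
  proof (rule ccontr)
    assume "\<not> nV P > 0"
    then have "(\<Sum>k\<le>4. Vv P k ^ 2) = 0" unfolding nV_def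
      by (metis (no_types, lifting) not_less order_antisym real_sqrt_ge_zero real_sqrt_eq_zero_cancel_iff sum_nonneg zero_le_power2)
    then have "Vv P 0 = 0" "Vv P 1 = 0" "Vv P 2 = 0" "Vv P 3 = 0" "Vv P 4 = 0"
      unfolding sum5 by (smt (verit) zero_le_power2 power_eq_0_iff)+
    then have h: "A1 P^2 = A2 P^2" "A1 P * A2 P = 0" "B1 P = 0" "B2 P = 0" "B3 P = 0"
      by (simp_all add: Vv_def)
    then have "A1 P = 0" "A2 P = 0" by auto
    then have "A3 P = 0" using N(1) by simp
    then show False using N(2) h \<open>A1 P = 0\<close> \<open>A2 P = 0\<close> by simp
  qed
qed

lemma topspace_nsphere4: "topspace (nsphere 4) = {x. (\<Sum>i\<le>4. x i ^ 2) = 1 \<and> (\<forall>i>4. x i = 0)}"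
  unfolding nsphere by simp

lemma Phi_in:
  assumes "P \<in> grassmann42" shows "Phi P \<in> topspace (nsphere 4)"
proof -
  have n: "nV P > 0" using nV_pos[OF assms] .
  have "(\<Sum>i\<le>4. Phi P i ^ 2) = (\<Sum>i\<le>4. Vv P i ^ 2) / nV P ^ 2"
    unfolding Phi_def by (simp add: power_divide sum_divide_distrib)
  also have "\<dots> = 1" using n unfolding nV_def
    by (simp add: sum_nonneg)
  finally show ?thesis unfolding topspace_nsphere4 by (auto simp: Phi_def Vv_def)
qed

lemma Vv_sign: "s \<in> signs4 \<Longrightarrow> Vv (sign_act s P) = Vv P"
proof -
  assume s: "s \<in> signs4"
  define m where "m = s$1 * s$2 * s$3 * s$4"
  have q: "m * m = 1" using s unfolding m_def by (auto simp: signs4_def forall_4 algebra_simps)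
  have e1: "(m*x)^2 = x^2" for x :: real
    by (metis q power_mult_distrib power2_eq_square mult_1)
  have e2: "2*(m*x)*(m*y) = 2*x*y" for x y :: real
    using q by (metis mult.assoc mult.left_commute mult_1_right)
  show ?thesis
    unfolding Vv_def AB_sign[OF s] m_def[symmetric] e1 e2 ..
qed

lemma Phi_sign: "s \<in> signs4 \<Longrightarrow> Phi (sign_act s P) = Phi P"
  by (simp add: Phi_def nV_def Vv_sign)


lemma Phi_inj:
  assumes P: "P \<in> grassmann42" and Q: "Q \<in> grassmann42" and eq: "Phi P = Phi Q"
  shows "\<exists>s\<in>signs4. Q = sign_act s P"
proof -
  obtain a b c d e f where Pd: "P = PM a b c d e f" and S: "a^2+b^2+c^2+d^2+e^2+f^2 = 1" and Pf: "a*f-b*e+c*d = 0"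
    using grass_PM[OF P] by blast
  obtain a' b' c' d' e' f' where Qd: "Q = PM a' b' c' d' e' f'" and S': "a'^2+b'^2+c'^2+d'^2+e'^2+f'^2 = 1"
    and Pf': "a'*f'-b'*e'+c'*d' = 0"
    using grass_PM[OF Q] by blast
  have nP: "nV P > 0" and nQ: "nV Q > 0" using nV_pos P Q by auto
  define t where "t = nV Q / nV P"
  have t0: "t > 0" using nP nQ by (simp add: t_def)
  have vt: "Vv Q k = t * Vv P k" for k
  proof -
    have "Vv P k / nV P = Vv Q k / nV Q" using fun_cong[OF eq, of k] by (simp add: Phi_def)
    then show ?thesis using nP nQ by (simp add: t_def field_simps)
  qed
  note NP = PM_N[OF S Pf, folded Pd] and NQ = PM_N[OF S' Pf', folded Qd]
  have h1: "A1 Q^2 - A2 Q^2 = t*(A1 P^2 - A2 P^2)" using vt[of 0] by (simp add: Vv_def)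
  have h2: "2*A1 Q*A2 Q = t*(2*A1 P*A2 P)" using vt[of 1] by (simp add: Vv_def)
  have hb: "B1 Q = t*B1 P" "B2 Q = t*B2 P" "B3 Q = t*B3 P" using vt[of 2] vt[of 3] vt[of 4] by (simp_all add: Vv_def)
  obtain g where g: "g = 1 \<or> g = -1" and r: "A1 Q = g*A1 P" "A2 Q = g*A2 P" "A3 Q = g*A3 P"
     "B1 Q = B1 P" "B2 Q = B2 P" "B3 Q = B3 P"
    using inj_core[OF NP(1) NQ(1) NP(2) NQ(2) t0 h1 h2 hb] by blast
  note abP = PM_AB[OF S Pf, folded Pd] and abQ = PM_AB[OF S' Pf', folded Qd]
  have r': "a'*f' = g*(a*f)" "a'^2-f'^2 = a^2-f^2" "b'*e' = g*(b*e)" "b'^2-e'^2 = b^2-e^2"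
     "c'*d' = g*(c*d)" "c'^2-d'^2 = c^2-d^2"
    using r unfolding abP abQ by (simp_all add: algebra_simps)
  obtain \<rho>1 where p1: "\<rho>1 = 1 \<or> \<rho>1 = -1" "a' = \<rho>1*a" "f' = g*\<rho>1*f" using pair_sign[OF g r'(1,2)] by blast
  obtain \<rho>2 where p2: "\<rho>2 = 1 \<or> \<rho>2 = -1" "b' = \<rho>2*b" "e' = g*\<rho>2*e" using pair_sign[OF g r'(3,4)] by blast
  obtain \<rho>3 where p3: "\<rho>3 = 1 \<or> \<rho>3 = -1" "c' = \<rho>3*c" "d' = g*\<rho>3*d" using pair_sign[OF g r'(5,6)] by blast
  define \<sigma> where "\<sigma> = g*\<rho>1*\<rho>2*\<rho>3"
  define s :: "real^4" where "s = (\<chi> i. if i = 1 then g else if i = 2 then g*\<sigma>*\<rho>1 else if i = 3 then g*\<sigma>*\<rho>2 else g*\<sigma>*\<rho>3)"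
  have s1: "s$1 = g" "s$2 = g*\<sigma>*\<rho>1" "s$3 = g*\<sigma>*\<rho>2" "s$4 = g*\<sigma>*\<rho>3" by (simp_all add: s_def)
  have sg: "\<sigma> = 1 \<or> \<sigma> = -1" unfolding \<sigma>_def using g p1(1) p2(1) p3(1) by auto
  have ss: "\<forall>i. s$i = 1 \<or> s$i = -1"
    unfolding forall_4 s1 using g sg p1(1) p2(1) p3(1) by auto
  have "Q = PM (\<sigma>* s$1* s$2*a) (\<sigma>* s$1* s$3*b) (\<sigma>* s$1* s$4*c) (\<sigma>* s$2* s$3*d) (\<sigma>* s$2* s$4*e) (\<sigma>* s$3* s$4*f)"
    unfolding Qd s1 p1(2,3) p2(2,3) p3(2,3) \<sigma>_def
    using g p1(1) p2(1) p3(1) by (elim disjE) simp_all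
  also have "\<dots> = sign_act s P" unfolding Pd by (rule PM_sign[OF ss sg])
  finally show ?thesis using ss by (auto simp: signs4_def)
qed

lemma Phi_surj:
  assumes y: "y \<in> topspace (nsphere 4)"
  shows "\<exists>P\<in>grassmann42. Phi P = y"
proof -
  have ys: "(\<Sum>i\<le>4. y i ^ 2) = 1" and yz: "\<And>i. i > 4 \<Longrightarrow> y i = 0"
    using y unfolding topspace_nsphere4 by auto
  have "y 0^2 + y 1^2 + y 2^2 + y 3^2 + y 4^2 = 1" using ys unfolding sum5 .
  then obtain a b c d e f t where S: "a^2+b^2+c^2+d^2+e^2+f^2 = 1" and Pf: "a*f-b*e+c*d = 0" and t: "t > 0"
    and v: "(4*a*f)^2 - (-4*b*e)^2 = t*y 0" "2*(4*a*f)*(-4*b*e) = t*y 1"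
     "2*(a^2-f^2) = t*y 2" "2*(b^2-e^2) = t*y 3" "2*(c^2-d^2) = t*y 4"
    using surj_core by blast
  define P where "P = PM a b c d e f"
  have G: "P \<in> grassmann42" unfolding P_def by (rule PM_grass[OF S Pf])
  note ab = PM_AB[OF S Pf, folded P_def]
  have vv: "Vv P k = t * y k" for k
  proof -
    consider "k = 0" | "k = 1" | "k = 2" | "k = 3" | "k = 4" | "k > 4" by linarith
    then show ?thesis
      by cases (use v yz in \<open>simp_all add: Vv_def ab\<close>)
  qed
  have "nV P = sqrt (t^2 * (\<Sum>k\<le>4. y k ^ 2))"
    unfolding nV_def vv by (simp add: power_mult_distrib sum_distrib_left)
  also have "\<dots> = t" using ys t by simp
  finally have "nV P = t" .
  then have "Phi P = y" using t by (simp add: Phi_def vv fun_eq_iff)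
  then show ?thesis using G by blast
qed


lemma cont_entry: "continuous_on S (\<lambda>P::real^4^4. P $ i $ j)"
  by (intro continuous_on_component continuous_on_id)

lemma cont_AB: fixes S :: "(real^4^4) set" shows "continuous_on S A1" "continuous_on S A2" "continuous_on S A3"
  "continuous_on S B1" "continuous_on S B2" "continuous_on S B3"
  unfolding A1_def[abs_def] A2_def[abs_def] A3_def[abs_def] B1_def[abs_def] B2_def[abs_def] B3_def[abs_def]
  by (intro continuous_intros cont_entry)+

lemma cont_Vv: "continuous_on (S::(real^4^4) set) (\<lambda>P. Vv P k)"
proof -
  consider "k = 0" | "k = 1" | "k = 2" | "k = 3" | "k = 4" | "k > 4" by linarith
  then show ?thesis
    by cases (simp_all add: Vv_def cont_AB continuous_intros)
qed

lemma Phi_cont: "continuous_map G42 (nsphere 4) Phi"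
  unfolding nsphere continuous_map_in_subtopology
proof
  show "continuous_map G42 (powertop_real UNIV) Phi"
    unfolding continuous_map_componentwise_UNIV G42_def continuous_map_iff_continuous
  proof
    fix k
    have nz: "\<And>P. P \<in> grassmann42 \<Longrightarrow> sqrt (\<Sum>k\<le>4. Vv P k ^ 2) \<noteq> 0"
      using nV_pos unfolding nV_def by fastforce
    have "continuous_on grassmann42 (\<lambda>P. Vv P k / nV P)"
      unfolding nV_def
      by (intro continuous_intros cont_Vv) (use nz in auto)
    then show "continuous_on grassmann42 (\<lambda>P. Phi P k)" by (simp add: Phi_def nV_def)
  qed
  show "Phi \<in> topspace G42 \<rightarrow> {x. (\<Sum>i\<le>4. (x i)\<^sup>2) = 1 \<and> (\<forall>i>4. x i = 0)}"
    using Phi_in unfolding topspace_nsphere4 G42_def by auto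
qed

lemma norm_le_sum_rows: "norm (P::real^'n^'m) \<le> (\<Sum>i\<in>UNIV. norm (P$i))"
  unfolding norm_vec_def by (rule L2_set_le_sum) auto

lemma compact_G: "compact grassmann42"
proof -
  have eq: "grassmann42 = {P::real^4^4. (\<forall>i j. P$j$i = P$i$j) \<and> (\<forall>i j. (\<Sum>k\<in>UNIV. P$i$k * P$k$j) = P$i$j)
      \<and> (\<Sum>i\<in>UNIV. P$i$i) = 2}"
    unfolding grass_char by (auto simp: vec_eq_iff transpose_def matrix_matrix_mult_def)
  have cl: "closed grassmann42"
    unfolding eq
    by (intro closed_Collect_conj closed_Collect_all closed_Collect_eq continuous_intros cont_entry)
  have "norm P \<le> 32" if PG: "P \<in> grassmann42" for P
  proof -
    obtain u v :: "real^4" where nu: "norm u = 1" and nv: "norm v = 1" and "u \<bullet> v = 0"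
      and e: "\<And>i j. P $ i $ j = u$i * u$j + v$i * v$j"
      by (rule grass_uv[OF PG]) blast
    have b: "\<bar>P$i$j\<bar> \<le> 2" for i j
    proof -
      have "\<bar>u$i\<bar> \<le> 1" "\<bar>u$j\<bar> \<le> 1" "\<bar>v$i\<bar> \<le> 1" "\<bar>v$j\<bar> \<le> 1"
        using component_le_norm_cart[of u] component_le_norm_cart[of v] nu nv by metis+
      then have "\<bar>u$i * u$j\<bar> \<le> 1" "\<bar>v$i * v$j\<bar> \<le> 1"
        by (simp_all add: abs_mult mult_le_one)
      then show ?thesis unfolding e by linarith
    qed
    have "norm P \<le> (\<Sum>i\<in>UNIV. norm (P$i))" by (rule norm_le_sum_rows)
    also have "\<dots> \<le> (\<Sum>i\<in>UNIV. \<Sum>j\<in>UNIV. \<bar>P$i$j\<bar>)"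
      by (intro sum_mono norm_le_l1_cart)
    also have "\<dots> \<le> (\<Sum>i\<in>(UNIV::4 set). \<Sum>j\<in>(UNIV::4 set). 2)"
      by (intro sum_mono b)
    also have "\<dots> = 32" by simp
    finally show ?thesis .
  qed
  then have "bounded grassmann42" unfolding bounded_iff by blast
  with cl show ?thesis by (simp add: compact_eq_bounded_closed)
qed


lemma topspace_quotient: "topspace (quotient_topology X q) = q ` topspace X"
proof -
  have "{x \<in> topspace X. q x \<in> q ` topspace X} = topspace X" by auto
  then have "openin (quotient_topology X q) (q ` topspace X)"
    unfolding openin_quotient_topology by auto
  moreover have "U \<subseteq> q ` topspace X" if "openin (quotient_topology X q) U" for U
    using that unfolding openin_quotient_topology by auto
  ultimately show ?thesis unfolding topspace_def by blast
qed

lemma quotient_homeo: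
  assumes cX: "compact_space X" and hY: "Hausdorff_space Y" and cf: "continuous_map X Y f"
    and surj: "f ` topspace X = topspace Y"
    and fib: "\<And>x y. x \<in> topspace X \<Longrightarrow> y \<in> topspace X \<Longrightarrow> f x = f y \<longleftrightarrow> q x = q y"
  shows "quotient_topology X q homeomorphic_space Y"
proof -
  let ?Q = "quotient_topology X q"
  define h where "h W = f (SOME x. x \<in> topspace X \<and> q x = W)" for W
  have hq: "h (q x) = f x" if "x \<in> topspace X" for x
  proof -
    have ex: "\<exists>x'. x' \<in> topspace X \<and> q x' = q x" using that by blast
    have "(SOME x'. x' \<in> topspace X \<and> q x' = q x) \<in> topspace X \<and> q (SOME x'. x' \<in> topspace X \<and> q x' = q x) = q x"
      by (rule someI_ex[OF ex])
    then show ?thesis unfolding h_def using fib that by blast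
  qed
  have tQ: "topspace ?Q = q ` topspace X" by (rule topspace_quotient)
  have cq: "continuous_map X ?Q q"
    unfolding continuous_map_def tQ openin_quotient_topology by auto
  have ch: "continuous_map ?Q Y h"
    unfolding continuous_map_def
  proof (intro conjI allI impI)
    show "h \<in> topspace ?Q \<rightarrow> topspace Y" unfolding tQ using hq surj by auto
  next
    fix U assume U: "openin Y U"
    have "{x \<in> topspace X. q x \<in> {W \<in> topspace ?Q. h W \<in> U}} = {x \<in> topspace X. f x \<in> U}"
      unfolding tQ using hq by (auto simp: image_iff) (metis fib)
    moreover have "openin X {x \<in> topspace X. f x \<in> U}"
      using cf U by (simp add: continuous_map_def)
    ultimately show "openin ?Q {W \<in> topspace ?Q. h W \<in> U}"
      unfolding openin_quotient_topology tQ by auto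
  qed
  have cQ: "compact_space ?Q"
    unfolding compact_space_def tQ
    using image_compactin[OF _ cq] cX unfolding compact_space_def by blast
  have cm: "closed_map ?Q Y h" by (rule continuous_imp_closed_map[OF ch cQ hY])
  have im: "h ` topspace ?Q = topspace Y" unfolding tQ using hq surj by (auto simp: image_iff) (metis image_iff)
  have inj: "inj_on h (topspace ?Q)"
    unfolding tQ inj_on_def using hq fib by auto
  have "homeomorphic_map ?Q Y h"
    by (rule bijective_closed_imp_homeomorphic_map[OF ch cm im inj])
  then show ?thesis by (rule homeomorphic_map_imp_homeomorphic_space)
qed

lemma sign_act_comp: "sign_act g (sign_act s P) = sign_act (g * s) P"
  by (simp add: vec_eq_iff sign_act_entry algebra_simps)

lemma sign_mult_closed: "g \<in> signs4 \<Longrightarrow> s \<in> signs4 \<Longrightarrow> g * s \<in> signs4"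
proof -
  assume g: "g \<in> signs4" and s: "s \<in> signs4"
  have "(g * s) $ i = 1 \<or> (g * s) $ i = -1" for i
  proof -
    have "g$i = 1 \<or> g$i = -1" "s$i = 1 \<or> s$i = -1" using g s unfolding signs4_def by auto
    then show ?thesis by auto
  qed
  then show ?thesis unfolding signs4_def by blast
qed

lemma one_signs: "(1::real^4) \<in> signs4" unfolding signs4_def by simp

lemma sign_act_one: "sign_act 1 P = P"
  by (simp add: vec_eq_iff sign_act_entry)

lemma orbit_eq:
  assumes s: "s \<in> signs4" shows "orbit signs4 sign_act (sign_act s P) = orbit signs4 sign_act P"
proof -
  have "(s * s) $ i = 1" for i
  proof -
    have "s$i = 1 \<or> s$i = -1" using s unfolding signs4_def by auto
    then show ?thesis by auto
  qed
  then have ss: "s * s = 1" by (simp add: vec_eq_iff)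
  show ?thesis
    unfolding orbit_def
  proof (intro set_eqI iffI)
    fix X assume "X \<in> (\<lambda>g. sign_act g (sign_act s P)) ` signs4"
    then obtain g where "g \<in> signs4" "X = sign_act (g * s) P" by (auto simp: sign_act_comp)
    then show "X \<in> (\<lambda>g. sign_act g P) ` signs4" using sign_mult_closed s by blast
  next
    fix X assume "X \<in> (\<lambda>g. sign_act g P) ` signs4"
    then obtain g where g: "g \<in> signs4" "X = sign_act g P" by auto
    then have "X = sign_act (g * s) (sign_act s P)" by (simp add: sign_act_comp mult.assoc ss)
    then show "X \<in> (\<lambda>g. sign_act g (sign_act s P)) ` signs4" using sign_mult_closed[OF g(1) s] by blast
  qed
qed

theorem mainTheorem16:
  shows "orbit_space G42 signs4 sign_act homeomorphic_space nsphere 4"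
  unfolding orbit_space_def
proof (rule quotient_homeo[where f = Phi])
  show "compact_space G42" unfolding G42_def compact_space_def
    using compact_G by (simp add: compactin_subtopology)
  show "Hausdorff_space (nsphere 4)" unfolding nsphere
    by (intro Hausdorff_space_subtopology) (simp add: Hausdorff_space_product_topology)
  show "continuous_map G42 (nsphere 4) Phi" by (rule Phi_cont)
  show "Phi ` topspace G42 = topspace (nsphere 4)"
    using Phi_in Phi_surj unfolding G42_def by auto
  fix P Q assume P: "P \<in> topspace G42" and Q: "Q \<in> topspace G42"
  show "Phi P = Phi Q \<longleftrightarrow> orbit signs4 sign_act P = orbit signs4 sign_act Q"
  proof
    assume "Phi P = Phi Q"
    then obtain s where "s \<in> signs4" "Q = sign_act s P" using Phi_inj P Q unfolding G42_def by auto
    then show "orbit signs4 sign_act P = orbit signs4 sign_act Q" using orbit_eq by metis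
  next
    assume "orbit signs4 sign_act P = orbit signs4 sign_act Q"
    moreover have "Q \<in> orbit signs4 sign_act Q"
      unfolding orbit_def using one_signs sign_act_one by (metis image_eqI)
    ultimately obtain s where "s \<in> signs4" "Q = sign_act s P" unfolding orbit_def by auto
    then show "Phi P = Phi Q" using Phi_sign by metis
  qed
qed


end
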